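(* Let $G$ be a finite simple graph of order $n$ without isolated vertices, with minimum degree $\delta$ and maximum degree $\Delta$. Let $f$ be a minimum STDF of $G$ (i.e. an STDF with $f(V(G))=\gamma_{st}(G)$), and let $V_+=\{v: f(v)=1\}$, $V_-=\{v:f(v)=-1\}$, $E_+=|E(G[V_+])|$, $E_-=|E(G[V_-])|$, let $[V_+,V_-]$ be the set of edges with one end in $V_+$ and the other in $V_-$, and let $V_e$ be the set of vertices of even degree. Then (a) $\left(\lfloor\frac{\delta}{2}\rfloor+1\right)|V_-|\leq |[V_+,V_-]|\leq\left(\lceil\frac{\Delta}{2}\rceil-1\right)|V_+|$; (b) $n+|V_-|+4E_-+|V_e|\leq 2E_++|[V_+,V_-]|$.
   Context: For a vertex $v$, $N(v)$ is its open neighborhood. A signed total dominating function (STDF) of $G$ is a function $f:V(G)\to\{-1,1\}$ such that $\sum_{u\in N(v)}f(u)\geq 1$ for every vertex $v$; the signed total domination number $\gamma_{st}(G)$ is the minimum of $\sum_{v\in V(G)}f(v)$ over all STDFs $f$ of $G$. $G[X]$ denotes the subgraph induced by $X$. *)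

theory Defs
  imports Complex_Main
begin

definition simple_graph :: "'a set \<Rightarrow> ('a \<Rightarrow> 'a \<Rightarrow> bool) \<Rightarrow> bool" where
  "simple_graph V E \<longleftrightarrow> finite V \<and> (\<forall>u v. E u v \<longrightarrow> u \<in> V \<and> v \<in> V)
     \<and> (\<forall>u v. E u v \<longrightarrow> E v u) \<and> (\<forall>v. \<not> E v v)"

definition nbhd :: "('a \<Rightarrow> 'a \<Rightarrow> bool) \<Rightarrow> 'a \<Rightarrow> 'a set" where
  "nbhd E v = {u. E v u}"

definition deg :: "('a \<Rightarrow> 'a \<Rightarrow> bool) \<Rightarrow> 'a \<Rightarrow> nat" where
  "deg E v = card (nbhd E v)"

definition min_deg :: "'a set \<Rightarrow> ('a \<Rightarrow> 'a \<Rightarrow> bool) \<Rightarrow> nat" where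
  "min_deg V E = Min (deg E ` V)"

definition max_deg :: "'a set \<Rightarrow> ('a \<Rightarrow> 'a \<Rightarrow> bool) \<Rightarrow> nat" where
  "max_deg V E = Max (deg E ` V)"

definition stdf :: "'a set \<Rightarrow> ('a \<Rightarrow> 'a \<Rightarrow> bool) \<Rightarrow> ('a \<Rightarrow> int) \<Rightarrow> bool" where
  "stdf V E f \<longleftrightarrow> (\<forall>v\<in>V. f v = 1 \<or> f v = -1) \<and> (\<forall>v\<in>V. (\<Sum>u\<in>nbhd E v. f u) \<ge> 1)"

definition gamma_st :: "'a set \<Rightarrow> ('a \<Rightarrow> 'a \<Rightarrow> bool) \<Rightarrow> int" where
  "gamma_st V E = Min {(\<Sum>v\<in>V. f v) | f. stdf V E f}"

definition edges_between :: "('a \<Rightarrow> 'a \<Rightarrow> bool) \<Rightarrow> 'a set \<Rightarrow> 'a set \<Rightarrow> 'a set set" where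
  "edges_between E A B = {{u, v} | u v. u \<in> A \<and> v \<in> B \<and> E u v}"

definition induced_edges :: "('a \<Rightarrow> 'a \<Rightarrow> bool) \<Rightarrow> 'a set \<Rightarrow> 'a set set" where
  "induced_edges E A = edges_between E A A"

end

theory Submission
  imports Defs
begin

definition pairs :: "('a \<Rightarrow> 'a \<Rightarrow> bool) \<Rightarrow> 'a set \<Rightarrow> 'a set \<Rightarrow> ('a \<times> 'a) set" where
  "pairs E A B = {(u,v). u \<in> A \<and> v \<in> B \<and> E u v}"

lemma pairs_card:
  assumes "finite A" "finite B"
  shows "card (pairs E A B) = (\<Sum>a\<in>A. card (nbhd E a \<inter> B))"
proof -
  have "pairs E A B = (SIGMA a:A. nbhd E a \<inter> B)"
    by (auto simp: pairs_def nbhd_def)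
  thus ?thesis using assms by simp
qed

lemma edges_img: "edges_between E A B = (\<lambda>(u,v). {u,v}) ` pairs E A B"
  by (auto simp: edges_between_def pairs_def)

lemma edges_disj:
  assumes "finite A" "finite B" "A \<inter> B = {}"
  shows "card (edges_between E A B) = card (pairs E A B)"
proof -
  have "inj_on (\<lambda>(u,v). {u,v}) (pairs E A B)"
    using assms(3) by (auto simp: inj_on_def pairs_def doubleton_eq_iff)
  thus ?thesis by (simp add: edges_img card_image)
qed

lemma edges_sym:
  assumes "\<forall>u v. E u v \<longrightarrow> E v u"
  shows "edges_between E A B = edges_between E B A"
  using assms unfolding edges_between_def by (auto simp: insert_commute)

lemma edges_same:
  assumes "finite A" "\<forall>u v. E u v \<longrightarrow> E v u" "\<forall>v. \<not> E v v"
  shows "card (pairs E A A) = 2 * card (edges_between E A A)"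
proof -
  let ?g = "\<lambda>(u::'a,v::'a). {u,v}"
  have fin: "finite (pairs E A A)"
  proof (rule finite_subset)
    show "pairs E A A \<subseteq> A \<times> A" by (auto simp: pairs_def)
  qed (use assms(1) in simp)
  have "card (pairs E A A) = (\<Sum>y\<in>?g ` pairs E A A. card {x \<in> pairs E A A. ?g x = y})"
    using sum.image_gen[OF fin, of "\<lambda>_. 1" ?g] by (simp only: card_eq_sum)
  also have "\<dots> = (\<Sum>y\<in>?g ` pairs E A A. 2)"
  proof (rule sum.cong[OF refl])
    fix y assume "y \<in> ?g ` pairs E A A"
    then obtain a b where ab: "(a,b) \<in> pairs E A A" "y = {a,b}" by auto
    have ne: "a \<noteq> b" using ab assms(3) by (auto simp: pairs_def)
    have "{x \<in> pairs E A A. ?g x = y} = {(a,b),(b,a)}"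
      using ab assms(2) by (auto simp: pairs_def doubleton_eq_iff)
    thus "card {x \<in> pairs E A A. ?g x = y} = 2" using ne by simp
  qed
  also have "\<dots> = 2 * card (edges_between E A A)" by (simp add: edges_img)
  finally show ?thesis .
qed

theorem lemma3p1:
  fixes V :: "'a set" and E :: "'a \<Rightarrow> 'a \<Rightarrow> bool" and f :: "'a \<Rightarrow> int"
  assumes "simple_graph V E"
    and "\<forall>v\<in>V. deg E v \<ge> 1"
    and "stdf V E f"
    and "(\<Sum>v\<in>V. f v) = gamma_st V E"
  defines "Vp \<equiv> {v \<in> V. f v = 1}" and "Vm \<equiv> {v \<in> V. f v = -1}"
  defines "Ep \<equiv> card (induced_edges E Vp)" and "Em \<equiv> card (induced_edges E Vm)"
    and "X \<equiv> card (edges_between E Vp Vm)"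
    and "Ve \<equiv> {v \<in> V. even (deg E v)}"
  shows "((\<lfloor>real (min_deg V E) / 2\<rfloor> + 1) * int (card Vm) \<le> int X
         \<and> int X \<le> (\<lceil>real (max_deg V E) / 2\<rceil> - 1) * int (card Vp))
         \<and> card V + card Vm + 4 * Em + card Ve \<le> 2 * Ep + X"
proof -
  have finV: "finite V" and inV: "\<And>u v. E u v \<Longrightarrow> u \<in> V \<and> v \<in> V"
    and sym: "\<forall>u v. E u v \<longrightarrow> E v u" and irr: "\<forall>v. \<not> E v v"
    using assms(1) by (auto simp: simple_graph_def)
  have f1: "\<And>v. v \<in> V \<Longrightarrow> f v = 1 \<or> f v = -1" and dom: "\<And>v. v \<in> V \<Longrightarrow> (\<Sum>u\<in>nbhd E v. f u) \<ge> 1"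
    using assms(3) by (auto simp: stdf_def)
  have finp: "finite Vp" "finite Vm" using finV by (auto simp: Vp_def Vm_def)
  have disj: "Vp \<inter> Vm = {}" by (auto simp: Vp_def Vm_def)
  define p where "p v = card (nbhd E v \<inter> Vp)" for v
  define m where "m v = card (nbhd E v \<inter> Vm)" for v
  have key: "int (p v) - int (m v) \<ge> 1 \<and> deg E v = p v + m v \<and>
      (even (deg E v) \<longrightarrow> int (p v) - int (m v) \<ge> 2)" if v: "v \<in> V" for v
  proof -
    have sub: "nbhd E v \<subseteq> V" using inV by (auto simp: nbhd_def)
    have finN: "finite (nbhd E v)" using sub finV finite_subset by blast
    have split: "nbhd E v = (nbhd E v \<inter> Vp) \<union> (nbhd E v \<inter> Vm)"
      using sub f1 by (auto simp: Vp_def Vm_def)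
    have dj: "(nbhd E v \<inter> Vp) \<inter> (nbhd E v \<inter> Vm) = {}" using disj by auto
    have "(\<Sum>u\<in>nbhd E v. f u) = (\<Sum>u\<in>nbhd E v \<inter> Vp. f u) + (\<Sum>u\<in>nbhd E v \<inter> Vm. f u)"
      by (subst split, rule sum.union_disjoint) (use finN dj in auto)
    also have "\<dots> = int (p v) - int (m v)"
      by (simp add: p_def m_def Vp_def Vm_def)
    finally have s: "(\<Sum>u\<in>nbhd E v. f u) = int (p v) - int (m v)" .
    have d: "deg E v = p v + m v" unfolding deg_def p_def m_def
      by (subst split, rule card_Un_disjoint) (use finN dj in auto)
    show ?thesis using dom[OF v] s d by presburger
  qed
  have X1: "X = (\<Sum>a\<in>Vp. m a)"
    unfolding X_def m_def using edges_disj[OF finp disj] pairs_card[OF finp] by simp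
  have X2: "X = (\<Sum>a\<in>Vm. p a)"
    unfolding X_def p_def using edges_disj[OF finp(2,1)] pairs_card[OF finp(2,1)] disj
      edges_sym[OF sym, of Vp Vm] by (simp add: Int_commute)
  have Ep2: "2 * Ep = (\<Sum>a\<in>Vp. p a)"
    unfolding Ep_def p_def induced_edges_def
    using edges_same[OF finp(1) sym irr] pairs_card[OF finp(1) finp(1)] by simp
  have Em2: "2 * Em = (\<Sum>a\<in>Vm. m a)"
    unfolding Em_def m_def induced_edges_def
    using edges_same[OF finp(2) sym irr] pairs_card[OF finp(2) finp(2)] by simp
  have VpV: "Vp \<subseteq> V" "Vm \<subseteq> V" by (auto simp: Vp_def Vm_def)
  have fl: "\<lfloor>real (min_deg V E) / 2\<rfloor> = int (min_deg V E div 2)"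
    using floor_divide_of_nat_eq[of "min_deg V E" 2] by simp
  have cl: "\<lceil>real (max_deg V E) / 2\<rceil> = int ((max_deg V E + 1) div 2)"
  proof -
    have "\<lceil>real (max_deg V E) / 2\<rceil> = - \<lfloor>- real (max_deg V E) / 2\<rfloor>"
      by (simp add: ceiling_def)
    also have "\<lfloor>- real (max_deg V E) / 2\<rfloor> = (- int (max_deg V E)) div 2"
      using floor_divide_of_int_eq[of "- int (max_deg V E)" 2] by simp
    finally show ?thesis by presburger
  qed
  have mn: "min_deg V E \<le> deg E v" if "v \<in> V" for v
    unfolding min_deg_def using finV that by simp
  have mx: "deg E v \<le> max_deg V E" if "v \<in> V" for v
    unfolding max_deg_def using finV that by simp
  have A: "(int (min_deg V E div 2) + 1) * int (card Vm) \<le> int X"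
  proof -
    have "(int (min_deg V E div 2) + 1) * int (card Vm) = (\<Sum>a\<in>Vm. int (min_deg V E div 2) + 1)"
      by simp
    also have "\<dots> \<le> (\<Sum>a\<in>Vm. int (p a))"
    proof (rule sum_mono)
      fix a assume "a \<in> Vm"
      hence "a \<in> V" using VpV by auto
      from key[OF this] mn[OF this] show "int (min_deg V E div 2) + 1 \<le> int (p a)" by presburger
    qed
    also have "\<dots> = int X" using X2 by simp
    finally show ?thesis .
  qed
  have B: "int X \<le> (int ((max_deg V E + 1) div 2) - 1) * int (card Vp)"
  proof -
    have "int X = (\<Sum>a\<in>Vp. int (m a))" using X1 by simp
    also have "\<dots> \<le> (\<Sum>a\<in>Vp. int ((max_deg V E + 1) div 2) - 1)"
    proof (rule sum_mono)
      fix a assume "a \<in> Vp"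
      hence "a \<in> V" using VpV by auto
      from key[OF this] mx[OF this] show "int (m a) \<le> int ((max_deg V E + 1) div 2) - 1" by presburger
    qed
    also have "\<dots> = (int ((max_deg V E + 1) div 2) - 1) * int (card Vp)" by simp
    finally show ?thesis .
  qed
  have Vsplit: "V = Vp \<union> Vm" using f1 by (auto simp: Vp_def Vm_def)
  have C1: "(\<Sum>v\<in>V. int (p v) - int (m v)) \<ge> (\<Sum>v\<in>V. 1 + (if even (deg E v) then 1 else 0))"
    by (rule sum_mono) (use key in auto)
  have C1': "(\<Sum>v\<in>V. 1 + (if even (deg E v) then 1 else (0::int))) = int (card V) + int (card Ve)"
    using finV by (simp add: sum.distrib sum.If_cases Ve_def Int_def)
  have C2: "(\<Sum>v\<in>Vm. int (p v) - int (m v)) \<ge> (\<Sum>v\<in>Vm. 1)"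
    by (rule sum_mono) (use key VpV in auto)
  have C3: "(\<Sum>v\<in>V. int (p v) - int (m v)) = (\<Sum>v\<in>Vp. int (p v) - int (m v)) + (\<Sum>v\<in>Vm. int (p v) - int (m v))"
    by (subst Vsplit, rule sum.union_disjoint) (use finp disj in auto)
  have E1: "(\<Sum>v\<in>Vp. int (p v) - int (m v)) = 2 * int Ep - int X"
    using Ep2 X1 by (simp add: sum_subtractf flip: of_nat_sum)
  have E2: "(\<Sum>v\<in>Vm. int (p v) - int (m v)) = int X - 2 * int Em"
    using Em2 X2 by (simp add: sum_subtractf flip: of_nat_sum)
  have "int (card V + card Vm + 4 * Em + card Ve) \<le> int (2 * Ep + X)"
    using C1 C1' C2 C3 E1 E2 by simp
  hence C: "card V + card Vm + 4 * Em + card Ve \<le> 2 * Ep + X" by linarith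
  show ?thesis using A B C fl cl by simp
qed

end
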